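(* Let $\Gamma$ be a connected signed graph on $N$ vertices with signed Laplacian $\mathcal{L}$, and let $P$ be the orthogonal projection of $\mathbb{R}^N$ onto $S_{\rm fixed}$. Then the operator $P\mathcal{L}$, considered as an operator from $S_{\rm fixed}$ to $S_{\rm fixed}$, has exactly $c(\Gamma_-)-1$ negative eigenvalues, exactly one zero eigenvalue and exactly $c(\Gamma_+)-1$ positive eigenvalues, independently of the choice of edge weights (with the given signs). In particular $S_{\rm fixed}$ is a maximal subspace of fixed index, i.e. a subspace of fixed index of dimension $c(\Gamma_+)+c(\Gamma_-)-1$.
   Context: A signed graph $\Gamma$ is a finite simple undirected graph with vertex set $\{1,\dots,N\}$ in which every edge $\{i,j\}$ carries a nonzero real weight $\gamma_{ij}$, which may be of either sign ($\gamma_{ij}=0$ for non-edges). The signed Laplacian has $\mathcal{L}_{ij}=\gamma_{ij}$ for $i\ne j$ and $\mathcal{L}_{ii}=-\sum_{k\ne i}\gamma_{ik}$. $\Gamma_+$ (resp. $\Gamma_-$) is the spanning subgraph on all vertices containing exactly the positively (resp. negatively) weighted edges; $c(H)$ is the number of connected components of $H$. $S_{\rm fixed}$ is the span of the characteristic vectors (entries $1$ on the component's vertices, $0$ elsewhere) of all components of $\Gamma_+$ and all components of $\Gamma_-$. A subspace $S$ (chosen independently of the weights) is a subspace of fixed index if the operator $P_S\mathcal{L}:S\to S$ ($P_S$ the orthogonal projection onto $S$) has the same numbers of negative, zero and positive eigenvalues for every choice of weights with the given signs. *)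

theory Defs
  imports "HOL-Analysis.Analysis"
begin

text \<open>A signed graph on the finite vertex type 'n is given by a weight function
  gamma, symmetric with zero diagonal; {i,j} is an edge iff gamma i j is nonzero.\<close>

definition signed_graph :: "('n::finite \<Rightarrow> 'n \<Rightarrow> real) \<Rightarrow> bool" where
  "signed_graph \<gamma> \<longleftrightarrow> (\<forall>i j. \<gamma> i j = \<gamma> j i) \<and> (\<forall>i. \<gamma> i i = 0)"

definition components :: "('n \<Rightarrow> 'n \<Rightarrow> bool) \<Rightarrow> 'n set set" where
  "components E = {{j. (\<lambda>a b. E a b \<or> E b a)\<^sup>*\<^sup>* i j} | i. True}"

definition connected_graph :: "('n \<Rightarrow> 'n \<Rightarrow> bool) \<Rightarrow> bool" where
  "connected_graph E \<longleftrightarrow> (\<forall>i j. (\<lambda>a b. E a b \<or> E b a)\<^sup>*\<^sup>* i j)"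

definition pos_edges :: "('n \<Rightarrow> 'n \<Rightarrow> real) \<Rightarrow> 'n \<Rightarrow> 'n \<Rightarrow> bool" where
  "pos_edges \<gamma> i j \<longleftrightarrow> \<gamma> i j > 0"

definition neg_edges :: "('n \<Rightarrow> 'n \<Rightarrow> real) \<Rightarrow> 'n \<Rightarrow> 'n \<Rightarrow> bool" where
  "neg_edges \<gamma> i j \<longleftrightarrow> \<gamma> i j < 0"

definition all_edges :: "('n \<Rightarrow> 'n \<Rightarrow> real) \<Rightarrow> 'n \<Rightarrow> 'n \<Rightarrow> bool" where
  "all_edges \<gamma> i j \<longleftrightarrow> \<gamma> i j \<noteq> 0"

definition num_components :: "('n::finite \<Rightarrow> 'n \<Rightarrow> bool) \<Rightarrow> nat" where
  "num_components E = card (components E)"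

definition signed_laplacian :: "('n::finite \<Rightarrow> 'n \<Rightarrow> real) \<Rightarrow> real^'n^'n" where
  "signed_laplacian \<gamma> = (\<chi> i j. if i = j then - (\<Sum>k\<in>UNIV - {i}. \<gamma> i k) else \<gamma> i j)"

definition char_vec :: "'n::finite set \<Rightarrow> real^'n" where
  "char_vec C = (\<chi> i. if i \<in> C then 1 else 0)"

definition S_fixed :: "('n::finite \<Rightarrow> 'n \<Rightarrow> real) \<Rightarrow> (real^'n) set" where
  "S_fixed \<gamma> = span (char_vec ` (components (pos_edges \<gamma>) \<union> components (neg_edges \<gamma>)))"

definition orth_proj :: "('a::euclidean_space) set \<Rightarrow> 'a \<Rightarrow> 'a" where
  "orth_proj S x = (THE p. p \<in> S \<and> (\<forall>s\<in>S. orthogonal (x - p) s))"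

definition compressed_op :: "('n::finite \<Rightarrow> 'n \<Rightarrow> real) \<Rightarrow> (real^'n) set \<Rightarrow> real^'n \<Rightarrow> real^'n" where
  "compressed_op \<gamma> S x = orth_proj S (signed_laplacian \<gamma> *v x)"

text \<open>Eigenvalues of an operator f considered as a map S to S, and multiplicities.
  (For the self-adjoint operator P_S L on S, geometric and algebraic multiplicity agree.)\<close>
definition eigenvalues_on :: "('a::euclidean_space \<Rightarrow> 'a) \<Rightarrow> 'a set \<Rightarrow> real set" where
  "eigenvalues_on f S = {c. \<exists>x\<in>S. x \<noteq> 0 \<and> f x = c *\<^sub>R x}"

definition eig_mult :: "('a::euclidean_space \<Rightarrow> 'a) \<Rightarrow> 'a set \<Rightarrow> real \<Rightarrow> nat" where
  "eig_mult f S c = dim {x\<in>S. f x = c *\<^sub>R x}"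

definition n_neg :: "('a::euclidean_space \<Rightarrow> 'a) \<Rightarrow> 'a set \<Rightarrow> nat" where
  "n_neg f S = (\<Sum>c\<in>{c\<in>eigenvalues_on f S. c < 0}. eig_mult f S c)"

definition n_zero :: "('a::euclidean_space \<Rightarrow> 'a) \<Rightarrow> 'a set \<Rightarrow> nat" where
  "n_zero f S = eig_mult f S 0"

definition n_pos :: "('a::euclidean_space \<Rightarrow> 'a) \<Rightarrow> 'a set \<Rightarrow> nat" where
  "n_pos f S = (\<Sum>c\<in>{c\<in>eigenvalues_on f S. c > 0}. eig_mult f S c)"

definition fixed_index :: "('n::finite \<Rightarrow> 'n \<Rightarrow> real) \<Rightarrow> (real^'n) set \<Rightarrow> bool" where
  "fixed_index \<gamma> S \<longleftrightarrow> subspace S \<and>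
     (\<forall>\<gamma>'. signed_graph \<gamma>' \<and> (\<forall>i j. sgn (\<gamma>' i j) = sgn (\<gamma> i j)) \<longrightarrow>
        n_neg (compressed_op \<gamma>' S) S = n_neg (compressed_op \<gamma> S) S \<and>
        n_zero (compressed_op \<gamma>' S) S = n_zero (compressed_op \<gamma> S) S \<and>
        n_pos (compressed_op \<gamma>' S) S = n_pos (compressed_op \<gamma> S) S)"

end

theory Submission
  imports Defs
begin


lemma orth_proj_char:
  fixes S :: "'a::euclidean_space set"
  assumes "subspace S"
  shows "orth_proj S x \<in> S \<and> (\<forall>s\<in>S. (x - orth_proj S x) \<bullet> s = 0)"
proof -
  obtain y z where y: "y \<in> span S" and z: "\<And>w. w \<in> span S \<Longrightarrow> orthogonal z w" and xyz: "x = y + z"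
    using orthogonal_subspace_decomp_exists[of S x] by blast
  have sp: "span S = S" using assms by simp
  have yS: "y \<in> S" using y sp by simp
  have "(x - y) \<bullet> s = 0" if "s \<in> S" for s
  proof -
    have "orthogonal z s" using z that sp by simp
    then show ?thesis using xyz by (simp add: orthogonal_def)
  qed
  then have ex: "y \<in> S \<and> (\<forall>s\<in>S. (x - y) \<bullet> s = 0)" using yS by blast
  have un: "p = y" if "p \<in> S \<and> (\<forall>s\<in>S. (x - p) \<bullet> s = 0)" for p
  proof -
    have d: "p - y \<in> S" using that ex assms by (simp add: subspace_diff)
    have "(x - p) \<bullet> (p - y) = 0" "(x - y) \<bullet> (p - y) = 0" using that ex d by auto
    moreover have "p - y = (x - y) - (x - p)" by simp
    ultimately have "(p - y) \<bullet> (p - y) = 0" by (metis diff_zero inner_diff_left)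
    then show ?thesis by simp
  qed
  have "(THE p. p \<in> S \<and> (\<forall>s\<in>S. orthogonal (x - p) s)) = y"
  proof (rule the_equality)
    show "y \<in> S \<and> (\<forall>s\<in>S. orthogonal (x - y) s)" using ex by (simp add: orthogonal_def)
  next
    fix p assume "p \<in> S \<and> (\<forall>s\<in>S. orthogonal (x - p) s)"
    then show "p = y" using un unfolding orthogonal_def by blast
  qed
  then show ?thesis using ex unfolding orth_proj_def by simp
qed

lemma orth_proj_eq:
  fixes S :: "'a::euclidean_space set"
  assumes "subspace S" "p \<in> S" "\<forall>s\<in>S. (x - p) \<bullet> s = 0"
  shows "orth_proj S x = p"
proof -
  have c: "orth_proj S x \<in> S \<and> (\<forall>s\<in>S. (x - orth_proj S x) \<bullet> s = 0)" using orth_proj_char[OF assms(1)] .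
  have d: "orth_proj S x - p \<in> S" using c assms by (simp add: subspace_diff)
  have "(x - p) \<bullet> (orth_proj S x - p) = 0" "(x - orth_proj S x) \<bullet> (orth_proj S x - p) = 0" using c d assms by auto
  moreover have "orth_proj S x - p = (x - p) - (x - orth_proj S x)" by simp
  ultimately have "(orth_proj S x - p) \<bullet> (orth_proj S x - p) = 0" by (metis diff_zero inner_diff_left)
  then show ?thesis by simp
qed

lemma orth_proj_linear:
  fixes S :: "'a::euclidean_space set"
  assumes "subspace S"
  shows "linear (orth_proj S)"
proof (rule linearI)
  fix x y
  have cx: "orth_proj S x \<in> S" "\<forall>s\<in>S. (x - orth_proj S x) \<bullet> s = 0" using orth_proj_char[OF assms, of x] by auto
  have cy: "orth_proj S y \<in> S" "\<forall>s\<in>S. (y - orth_proj S y) \<bullet> s = 0" using orth_proj_char[OF assms, of y] by auto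
  have m: "orth_proj S x + orth_proj S y \<in> S" using cx cy assms by (simp add: subspace_add)
  have o: "\<forall>s\<in>S. (x + y - (orth_proj S x + orth_proj S y)) \<bullet> s = 0"
  proof
    fix s assume "s \<in> S"
    then have "(x - orth_proj S x) \<bullet> s + (y - orth_proj S y) \<bullet> s = 0" using cx cy by simp
    moreover have "x + y - (orth_proj S x + orth_proj S y) = (x - orth_proj S x) + (y - orth_proj S y)" by simp
    ultimately show "(x + y - (orth_proj S x + orth_proj S y)) \<bullet> s = 0" by (simp only: inner_add_left)
  qed
  show "orth_proj S (x + y) = orth_proj S x + orth_proj S y"
    by (rule orth_proj_eq[OF assms m o])
next
  fix c :: real and x
  have cx: "orth_proj S x \<in> S" "\<forall>s\<in>S. (x - orth_proj S x) \<bullet> s = 0" using orth_proj_char[OF assms, of x] by auto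
  have m: "c *\<^sub>R orth_proj S x \<in> S" using cx assms by (simp add: subspace_scale)
  have o: "\<forall>s\<in>S. (c *\<^sub>R x - c *\<^sub>R orth_proj S x) \<bullet> s = 0"
  proof
    fix s assume "s \<in> S"
    then have "c * ((x - orth_proj S x) \<bullet> s) = 0" using cx by simp
    moreover have "c *\<^sub>R x - c *\<^sub>R orth_proj S x = c *\<^sub>R (x - orth_proj S x)" by (simp add: scaleR_diff_right)
    ultimately show "(c *\<^sub>R x - c *\<^sub>R orth_proj S x) \<bullet> s = 0" by (simp only: inner_scaleR_left)
  qed
  show "orth_proj S (c *\<^sub>R x) = c *\<^sub>R orth_proj S x"
    by (rule orth_proj_eq[OF assms m o])
qed

lemma real_quad_aux:
  fixes a b :: real
  assumes "\<And>t. 2*t*a + t^2*b \<le> 0" "a \<ge> 0"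
  shows "a = 0"
proof (rule ccontr)
  assume "a \<noteq> 0" then have a: "a > 0" using assms by simp
  define t where "t = a / (\<bar>b\<bar> + 1)"
  have t: "t > 0" using a by (simp add: t_def add_pos_nonneg)
  have e0: "t * (\<bar>b\<bar> + 1) = a" unfolding t_def by (smt (verit) nonzero_eq_divide_eq abs_ge_zero)
  then have e: "t * \<bar>b\<bar> = a - t" by (simp add: algebra_simps)
  have "-\<bar>b\<bar> \<le> b" by simp
  from mult_left_mono[OF this zero_le_power2[of t]] have b1: "t^2*b \<ge> -(t^2*\<bar>b\<bar>)" by simp
  have "t^2*\<bar>b\<bar> = t*(t*\<bar>b\<bar>)" by (simp add: power2_eq_square)
  also have "\<dots> = t*a - t^2" using e by (simp add: power2_eq_square right_diff_distrib)
  finally have b2: "t^2*\<bar>b\<bar> = t*a - t^2" .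
  have b3: "t*a > 0" "t^2 > 0" using t a by auto
  have "2*t*a + t^2*b > 0" using b1 b2 b3 by linarith
  then show False using assms(1)[of t] by simp
qed

lemma exists_eigvec:
  fixes f :: "'a::euclidean_space \<Rightarrow> 'a"
  assumes W: "subspace W" "W \<noteq> {0}" and lin: "linear f"
    and inv: "\<forall>x\<in>W. f x \<in> W" and sym: "\<forall>x\<in>W. \<forall>y\<in>W. f x \<bullet> y = x \<bullet> f y"
  shows "\<exists>u\<in>W. u \<noteq> 0 \<and> (\<exists>c. f u = c *\<^sub>R u)"
proof -
  let ?K = "W \<inter> sphere 0 1"
  have cK: "compact ?K" using closed_subspace[OF W(1)] compact_sphere by blast
  obtain w0 where w0: "w0 \<in> W" "w0 \<noteq> 0" using W subspace_0 by blast
  have "(1 / norm w0) *\<^sub>R w0 \<in> ?K" using w0 W(1) by (simp add: subspace_scale)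
  then have neK: "?K \<noteq> {}" by blast
  have bl: "bounded_linear f" using lin linear_conv_bounded_linear by blast
  have cont: "continuous_on ?K (\<lambda>x. f x \<bullet> x)"
    by (intro continuous_intros linear_continuous_on[OF bl])
  obtain u where u: "u \<in> ?K" and umax: "\<And>y. y \<in> ?K \<Longrightarrow> f y \<bullet> y \<le> f u \<bullet> u"
    using continuous_attains_sup[OF cK neK cont] by blast
  define c where "c = f u \<bullet> u"
  define w where "w = f u - c *\<^sub>R u"
  have uW: "u \<in> W" and nu: "norm u = 1" using u by auto
  have uu: "u \<bullet> u = 1" using nu by (simp add: dot_square_norm)
  have wW: "w \<in> W" unfolding w_def using inv uW W(1) by (simp add: subspace_diff subspace_scale)
  have uw: "u \<bullet> w = 0" unfolding w_def c_def using uu by (simp add: inner_diff_right inner_commute)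
  have fuw: "f u \<bullet> w = w \<bullet> w"
  proof -
    have "f u = w + c *\<^sub>R u" by (simp add: w_def)
    then show ?thesis using uw by (simp add: inner_add_left inner_add_right inner_commute)
  qed
  have fwu: "f w \<bullet> u = f u \<bullet> w" using sym wW uW by (simp add: inner_commute)
  have ineq: "2*t*(w \<bullet> w) + t^2*(f w \<bullet> w - c * (w \<bullet> w)) \<le> 0" for t
  proof -
    define v where "v = u + t *\<^sub>R w"
    have vW: "v \<in> W" unfolding v_def using uW wW W(1) by (simp add: subspace_add subspace_scale)
    have vv: "v \<bullet> v = 1 + t^2 * (w \<bullet> w)" unfolding v_def using uu uw
      by (simp add: inner_add_left inner_add_right inner_commute power2_eq_square)
    have vpos: "v \<bullet> v > 0" using vv by (smt (verit) inner_ge_zero mult_nonneg_nonneg zero_le_power2)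
    have fv: "f v \<bullet> v = c + 2*t*(w \<bullet> w) + t^2 * (f w \<bullet> w)"
      unfolding v_def using fuw fwu
      by (simp add: linear_add[OF lin] linear_scale[OF lin] inner_add_left inner_add_right c_def
          power2_eq_square algebra_simps)
    define y where "y = (1 / norm v) *\<^sub>R v"
    have nv: "norm v > 0" using vpos by (metis inner_zero_left less_irrefl zero_less_norm_iff)
    have "y \<in> ?K" unfolding y_def using vW W(1) nv by (simp add: subspace_scale)
    then have "f y \<bullet> y \<le> c" using umax c_def by blast
    moreover have "f y \<bullet> y = (f v \<bullet> v) / (v \<bullet> v)"
      unfolding y_def using nv by (simp add: linear_scale[OF lin] dot_square_norm power2_eq_square)
    ultimately have "f v \<bullet> v \<le> c * (v \<bullet> v)" using vpos by (simp add: divide_le_eq)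
    then show ?thesis using fv vv by (simp add: algebra_simps)
  qed
  have "w \<bullet> w = 0" by (rule real_quad_aux[OF ineq]) simp
  then have "w = 0" by simp
  then have "f u = c *\<^sub>R u" by (simp add: w_def)
  moreover have "u \<noteq> 0" using nu by auto
  ultimately show ?thesis using uW by blast
qed



locale sa_op =
  fixes S :: "'a::euclidean_space set" and f :: "'a \<Rightarrow> 'a"
  assumes sub: "subspace S" and lin: "linear f" and inv: "\<And>x. x \<in> S \<Longrightarrow> f x \<in> S"
    and sym: "\<And>x y. x \<in> S \<Longrightarrow> y \<in> S \<Longrightarrow> f x \<bullet> y = x \<bullet> f y"
begin

definition E :: "real \<Rightarrow> 'a set" where "E c = {x\<in>S. f x = c *\<^sub>R x}"

lemma E_sub: "subspace (E c)"
  unfolding E_def subspace_def using sub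
  by (auto simp: subspace_0 subspace_add subspace_scale linear_add[OF lin] linear_scale[OF lin]
      linear_0[OF lin] algebra_simps)

lemma E_S: "E c \<subseteq> S" unfolding E_def by auto

lemma E_orth: "c \<noteq> d \<Longrightarrow> x \<in> E c \<Longrightarrow> y \<in> E d \<Longrightarrow> x \<bullet> y = 0"
proof -
  assume cd: "c \<noteq> d" and x: "x \<in> E c" and y: "y \<in> E d"
  have "c * (x \<bullet> y) = f x \<bullet> y" using x by (simp add: E_def)
  also have "\<dots> = x \<bullet> f y" using x y sym unfolding E_def by blast
  also have "\<dots> = d * (x \<bullet> y)" using y by (simp add: E_def)
  finally show ?thesis using cd by simp
qed

lemma eig_iff: "c \<in> eigenvalues_on f S \<longleftrightarrow> E c \<noteq> {0}"
  unfolding eigenvalues_on_def using E_sub[of c] subspace_0 by (auto simp: E_def)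

lemma span_UE_S: "span (\<Union>c\<in>C. E c) \<subseteq> S"
  using E_S sub by (intro span_minimal) auto

lemma finite_eig: "finite (eigenvalues_on f S)"
proof -
  let ?ev = "eigenvalues_on f S"
  define u where "u c = (SOME x. x \<in> S \<and> x \<noteq> 0 \<and> f x = c *\<^sub>R x)" for c
  have u: "u c \<in> S \<and> u c \<noteq> 0 \<and> f (u c) = c *\<^sub>R u c" if "c \<in> ?ev" for c
  proof -
    have "\<exists>x. x \<in> S \<and> x \<noteq> 0 \<and> f x = c *\<^sub>R x" using that unfolding eigenvalues_on_def by blast
    then show ?thesis unfolding u_def by (rule someI_ex)
  qed
  have uE: "u c \<in> E c" if "c \<in> ?ev" for c using u[OF that] by (simp add: E_def)
  have inj: "inj_on u ?ev"
  proof (rule inj_onI)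
    fix c d assume c: "c \<in> ?ev" and d: "d \<in> ?ev" and eq: "u c = u d"
    show "c = d"
    proof (rule ccontr)
      assume "c \<noteq> d"
      then have "u c \<bullet> u d = 0" using E_orth uE c d by blast
      then show False using eq u[OF c] by simp
    qed
  qed
  have po: "pairwise orthogonal (u ` ?ev)"
    unfolding pairwise_def orthogonal_def
  proof (intro ballI impI)
    fix a b assume a: "a \<in> u ` ?ev" and b: "b \<in> u ` ?ev" and ab: "a \<noteq> b"
    then obtain c d where c: "c \<in> ?ev" "a = u c" and d: "d \<in> ?ev" "b = u d" by blast
    have "c \<noteq> d" using ab c d by blast
    then show "a \<bullet> b = 0" using E_orth[OF _ uE[OF c(1)] uE[OF d(1)]] c d by simp
  qed
  have "0 \<notin> u ` ?ev" using u by auto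
  then have "independent (u ` ?ev)" using pairwise_orthogonal_independent po by blast
  then have "finite (u ` ?ev)" using independent_bound by blast
  then show ?thesis using finite_imageD inj by blast
qed

lemma dim_UE:
  assumes "finite C"
  shows "dim (span (\<Union>c\<in>C. E c)) = (\<Sum>c\<in>C. dim (E c))"
  using assms
proof (induction C rule: finite_induct)
  case empty then show ?case by simp
next
  case (insert d C)
  let ?V = "span (\<Union>c\<in>C. E c)"
  have eq: "span (\<Union>c\<in>insert d C. E c) = {x + y |x y. x \<in> E d \<and> y \<in> ?V}"
    using span_Un[of "E d" "\<Union>c\<in>C. E c"] E_sub[of d] by (simp only: span_eq_iff[THEN iffD2, OF E_sub] image_insert Union_insert)
  have int: "E d \<inter> ?V = {0}"
  proof
    show "E d \<inter> ?V \<subseteq> {0}"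
    proof
      fix x assume x: "x \<in> E d \<inter> ?V"
      have "orthogonal x x"
      proof (rule orthogonal_to_span[of x "\<Union>c\<in>C. E c"])
        show "x \<in> span (\<Union>c\<in>C. E c)" using x by blast
      next
        fix y assume "y \<in> (\<Union>c\<in>C. E c)"
        then obtain c where c: "c \<in> C" "y \<in> E c" by blast
        have "c \<noteq> d" using c insert(2) by blast
        then show "orthogonal x y" using E_orth[of d c x y] x c unfolding orthogonal_def by auto
      qed
      then show "x \<in> {0}" by (simp add: orthogonal_def)
    qed
  next
    show "{0} \<subseteq> E d \<inter> ?V" using E_sub[of d] subspace_0 span_0 by auto
  qed
  have "dim (span (\<Union>c\<in>insert d C. E c)) = dim (E d) + dim ?V"
    using dim_sums_Int[OF E_sub[of d] subspace_span[of "\<Union>c\<in>C. E c"]] eq int by simp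
  then show ?case using insert by simp
qed

lemma sign_UE:
  assumes "finite C" "\<forall>c\<in>C. s * c > 0" "x \<in> span (\<Union>c\<in>C. E c)"
  shows "s * (f x \<bullet> x) \<ge> 0 \<and> (s * (f x \<bullet> x) = 0 \<longrightarrow> x = 0)"
  using assms
proof (induction C arbitrary: x rule: finite_induct)
  case empty then show ?case by (simp add: linear_0[OF lin])
next
  case (insert d C)
  let ?V = "span (\<Union>c\<in>C. E c)"
  obtain a b where ab: "x = a + b" "a \<in> E d" "b \<in> ?V"
  proof -
    have "x \<in> span (E d \<union> (\<Union>c\<in>C. E c))" using insert(5) by simp
    then show ?thesis using that span_Un[of "E d" "\<Union>c\<in>C. E c"] span_eq_iff[THEN iffD2, OF E_sub[of d]] by auto
  qed
  have ortho: "a \<bullet> b = 0"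
  proof -
    have "orthogonal a b"
    proof (rule orthogonal_to_span[of b "\<Union>c\<in>C. E c"])
      show "b \<in> span (\<Union>c\<in>C. E c)" using ab by blast
    next
      fix y assume "y \<in> (\<Union>c\<in>C. E c)"
      then obtain c where c: "c \<in> C" "y \<in> E c" by blast
      have "c \<noteq> d" using c insert(2) by blast
      then show "orthogonal a y" using E_orth[of d c a y] ab c unfolding orthogonal_def by auto
    qed
    then show ?thesis by (simp add: orthogonal_def)
  qed
  have aS: "a \<in> S" and bS: "b \<in> S" using ab E_S span_UE_S by auto
  have fa: "f a = d *\<^sub>R a" using ab by (simp add: E_def)
  have "f x \<bullet> x = f a \<bullet> a + f a \<bullet> b + f b \<bullet> a + f b \<bullet> b"
    using ab by (simp add: linear_add[OF lin] inner_add_left inner_add_right)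
  also have "f b \<bullet> a = b \<bullet> f a" using sym aS bS by simp
  finally have Q: "f x \<bullet> x = d * (a \<bullet> a) + f b \<bullet> b"
    using fa ortho by (simp add: inner_commute)
  have IH: "s * (f b \<bullet> b) \<ge> 0 \<and> (s * (f b \<bullet> b) = 0 \<longrightarrow> b = 0)"
    using insert ab by auto
  have sd: "s * d > 0" using insert by simp
  have "s * (d * (a \<bullet> a)) \<ge> 0" using sd by (simp add: mult.assoc[symmetric])
  moreover have "s * (d * (a \<bullet> a)) = 0 \<longrightarrow> a = 0" using sd
    by (auto simp: mult.assoc[symmetric])
  ultimately have A0: "s * (d * (a \<bullet> a)) \<ge> 0" and A1: "s * (d * (a \<bullet> a)) = 0 \<longrightarrow> a = 0" by auto
  have Qx: "s * (f x \<bullet> x) = s * (d * (a \<bullet> a)) + s * (f b \<bullet> b)" using Q ab by (simp add: distrib_left)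
  show ?case
  proof (intro conjI impI)
    show "s * (f x \<bullet> x) \<ge> 0" using Qx A0 IH by linarith
  next
    assume "s * (f x \<bullet> x) = 0"
    then have "s * (d * (a \<bullet> a)) = 0" "s * (f b \<bullet> b) = 0" using Qx A0 IH by linarith+
    then have "a = 0" "b = 0" using A1 IH by auto
    then show "x = 0" using ab by simp
  qed
qed

lemma complete: "span (\<Union>c\<in>eigenvalues_on f S. E c) = S"
proof (rule ccontr)
  let ?V = "span (\<Union>c\<in>eigenvalues_on f S. E c)"
  assume ne: "?V \<noteq> S"
  have VS: "?V \<subseteq> S" by (rule span_UE_S)
  then obtain x where x: "x \<in> S" "x \<notin> ?V" using ne by blast
  obtain y z where y: "y \<in> span ?V" and z: "\<And>w. w \<in> span ?V \<Longrightarrow> orthogonal z w" and xyz: "x = y + z"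
    using orthogonal_subspace_decomp_exists[of ?V x] by blast
  define W where "W = {w\<in>S. \<forall>v\<in>?V. w \<bullet> v = 0}"
  have spV: "span ?V = ?V" by simp
  have yS: "y \<in> S" using y spV VS by blast
  have zS: "z \<in> S" using subspace_diff[OF sub x(1) yS] xyz by simp
  have z0: "z \<noteq> 0" using x xyz y spV by auto
  have zW: "z \<in> W" unfolding W_def using zS z spV by (auto simp: orthogonal_def)
  have Wsub: "subspace W" unfolding W_def subspace_def using sub
    by (auto simp: subspace_0 subspace_add subspace_scale inner_add_left)
  have Vinv: "f v \<in> ?V" if "v \<in> ?V" for v
  proof -
    have "f ` ?V = span (f ` (\<Union>c\<in>eigenvalues_on f S. E c))"
      by (rule span_linear_image[OF lin, symmetric])
    also have "\<dots> \<subseteq> ?V"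
    proof (rule span_minimal)
      show "f ` (\<Union>c\<in>eigenvalues_on f S. E c) \<subseteq> ?V"
      proof
        fix w assume "w \<in> f ` (\<Union>c\<in>eigenvalues_on f S. E c)"
        then obtain c v where c: "c \<in> eigenvalues_on f S" "v \<in> E c" "w = f v" by blast
        have "f v = c *\<^sub>R v" using c by (simp add: E_def)
        then have "w \<in> E c" using c subspace_scale[OF E_sub] by metis
        then have "w \<in> (\<Union>c\<in>eigenvalues_on f S. E c)" using c(1) by blast
        then show "w \<in> ?V" by (rule span_base)
      qed
    qed simp
    finally show ?thesis using that by blast
  qed
  have Winv: "\<forall>w\<in>W. f w \<in> W"
  proof
    fix w assume w: "w \<in> W"
    then have wS: "w \<in> S" by (simp add: W_def)
    have "f w \<bullet> v = 0" if v: "v \<in> ?V" for v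
    proof -
      have "v \<in> S" using v VS by blast
      then have "f w \<bullet> v = w \<bullet> f v" using sym wS by blast
      also have "\<dots> = 0" using w Vinv[OF v] by (simp add: W_def)
      finally show ?thesis .
    qed
    then show "f w \<in> W" using inv wS by (simp add: W_def)
  qed
  have Wsym: "\<forall>x\<in>W. \<forall>y\<in>W. f x \<bullet> y = x \<bullet> f y" using sym unfolding W_def by auto
  have "W \<noteq> {0}" using zW z0 by blast
  then obtain u c where u: "u \<in> W" "u \<noteq> 0" "f u = c *\<^sub>R u"
    using exists_eigvec[OF Wsub _ lin Winv Wsym] by blast
  have uS: "u \<in> S" using u W_def by auto
  then have "c \<in> eigenvalues_on f S" using u unfolding eigenvalues_on_def by blast
  moreover have "u \<in> E c" using u uS by (simp add: E_def)
  ultimately have "u \<in> (\<Union>c\<in>eigenvalues_on f S. E c)" by blast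
  then have "u \<in> ?V" by (rule span_base)
  then have "u \<bullet> u = 0" using u unfolding W_def by auto
  then show False using u by simp
qed

lemma dim_total: "dim S = (\<Sum>c\<in>eigenvalues_on f S. dim (E c))"
  using dim_UE[OF finite_eig] complete by simp

end



definition one :: "real^'n::finite" where "one = (\<chi> i. 1)"

lemma Lmv:
  fixes \<gamma> :: "'n::finite \<Rightarrow> 'n \<Rightarrow> real"
  assumes "signed_graph \<gamma>"
  shows "(signed_laplacian \<gamma> *v x) $ i = (\<Sum>j\<in>UNIV. \<gamma> i j * (x$j - x$i))"
proof -
  have g0: "\<gamma> i i = 0" using assms by (simp add: signed_graph_def)
  let ?A = "\<Sum>k\<in>UNIV - {i}. \<gamma> i k"
  have "(signed_laplacian \<gamma> *v x) $ i = (\<Sum>j\<in>UNIV. (if i = j then - ?A else \<gamma> i j) * x$j)"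
    by (simp add: matrix_vector_mult_def signed_laplacian_def)
  also have "\<dots> = (- ?A) * x$i + (\<Sum>j\<in>UNIV - {i}. (if i = j then - ?A else \<gamma> i j) * x$j)"
    by (simp add: sum.remove[of UNIV i])
  also have "(\<Sum>j\<in>UNIV - {i}. (if i = j then - ?A else \<gamma> i j) * x$j) = (\<Sum>j\<in>UNIV - {i}. \<gamma> i j * x$j)"
    by (rule sum.cong) auto
  also have "(- ?A) * x$i + (\<Sum>j\<in>UNIV - {i}. \<gamma> i j * x$j) = (\<Sum>j\<in>UNIV - {i}. \<gamma> i j * (x$j - x$i))"
    by (simp add: sum_subtractf right_diff_distrib sum_distrib_right)
  also have "\<dots> = (\<Sum>j\<in>UNIV. \<gamma> i j * (x$j - x$i))"
    using g0 by (simp add: sum.remove[of UNIV i])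
  finally show ?thesis .
qed

lemma L_one:
  fixes \<gamma> :: "'n::finite \<Rightarrow> 'n \<Rightarrow> real"
  assumes "signed_graph \<gamma>"
  shows "signed_laplacian \<gamma> *v one = 0"
  by (simp add: vec_eq_iff Lmv[OF assms] one_def)

lemma L_transpose:
  fixes \<gamma> :: "'n::finite \<Rightarrow> 'n \<Rightarrow> real"
  assumes "signed_graph \<gamma>"
  shows "transpose (signed_laplacian \<gamma>) = signed_laplacian \<gamma>"
proof -
  have s: "\<gamma> i j = \<gamma> j i" for i j using assms by (simp add: signed_graph_def)
  show ?thesis
    unfolding transpose_def signed_laplacian_def vec_eq_iff using s by auto
qed

lemma L_sym:
  fixes \<gamma> :: "'n::finite \<Rightarrow> 'n \<Rightarrow> real"
  assumes "signed_graph \<gamma>"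
  shows "(signed_laplacian \<gamma> *v x) \<bullet> y = x \<bullet> (signed_laplacian \<gamma> *v y)"
proof -
  have "(signed_laplacian \<gamma> *v x) = x v* signed_laplacian \<gamma>"
    using transpose_matrix_vector[of "signed_laplacian \<gamma>" x] L_transpose[OF assms] by simp
  then show ?thesis by (simp add: dot_lmul_matrix)
qed

lemma Q_formula:
  fixes \<gamma> :: "'n::finite \<Rightarrow> 'n \<Rightarrow> real"
  assumes "signed_graph \<gamma>"
  shows "(signed_laplacian \<gamma> *v x) \<bullet> x = (\<Sum>i\<in>UNIV. \<Sum>j\<in>UNIV. - \<gamma> i j * (x$i - x$j)^2) / 2"
proof -
  have s: "\<gamma> i j = \<gamma> j i" for i j using assms by (simp add: signed_graph_def)
  define T where "T = (\<Sum>i\<in>UNIV. \<Sum>j\<in>UNIV. \<gamma> i j * (x$j - x$i) * x$i)"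
  have T1: "(signed_laplacian \<gamma> *v x) \<bullet> x = T"
    unfolding T_def inner_vec_def by (simp add: Lmv[OF assms] sum_distrib_right)
  have "T = (\<Sum>j\<in>UNIV. \<Sum>i\<in>UNIV. \<gamma> i j * (x$j - x$i) * x$i)"
    unfolding T_def by (rule sum.swap)
  also have "\<dots> = (\<Sum>i\<in>UNIV. \<Sum>j\<in>UNIV. \<gamma> i j * (x$i - x$j) * x$j)"
    using s by simp
  finally have T2: "T = (\<Sum>i\<in>UNIV. \<Sum>j\<in>UNIV. \<gamma> i j * (x$i - x$j) * x$j)" .
  have "2 * T = (\<Sum>i\<in>UNIV. \<Sum>j\<in>UNIV. \<gamma> i j * (x$j - x$i) * x$i + \<gamma> i j * (x$i - x$j) * x$j)"
  proof -
    have "(\<Sum>i\<in>UNIV. \<Sum>j\<in>UNIV. \<gamma> i j * (x$j - x$i) * x$i + \<gamma> i j * (x$i - x$j) * x$j)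
      = (\<Sum>i\<in>UNIV. \<Sum>j\<in>UNIV. \<gamma> i j * (x$j - x$i) * x$i) + (\<Sum>i\<in>UNIV. \<Sum>j\<in>UNIV. \<gamma> i j * (x$i - x$j) * x$j)"
      by (simp only: sum.distrib)
    then show ?thesis using T2 unfolding T_def by simp
  qed
  also have "\<dots> = (\<Sum>i\<in>UNIV. \<Sum>j\<in>UNIV. - \<gamma> i j * (x$i - x$j)^2)"
    by (intro sum.cong refl) (simp add: power2_eq_square algebra_simps)
  finally show ?thesis using T1 by simp
qed

lemma Q_P:
  fixes \<gamma> :: "'n::finite \<Rightarrow> 'n \<Rightarrow> real"
  assumes "signed_graph \<gamma>" "\<And>i j. \<gamma> i j > 0 \<Longrightarrow> x$i = x$j"
  shows "(signed_laplacian \<gamma> *v x) \<bullet> x \<ge> 0 \<and>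
    ((signed_laplacian \<gamma> *v x) \<bullet> x = 0 \<longrightarrow> (\<forall>i j. \<gamma> i j < 0 \<longrightarrow> x$i = x$j))"
proof -
  have t: "- \<gamma> i j * (x$i - x$j)^2 \<ge> 0" for i j
  proof (cases "\<gamma> i j > 0")
    case True then show ?thesis using assms(2)[of i j] by simp
  next
    case False then show ?thesis by (simp add: mult_nonpos_nonneg)
  qed
  have nn: "(\<Sum>j\<in>UNIV. - \<gamma> i j * (x$i - x$j)^2) \<ge> 0" for i using t by (simp add: sum_nonneg)
  show ?thesis
  proof (intro conjI impI allI)
    show "(signed_laplacian \<gamma> *v x) \<bullet> x \<ge> 0" unfolding Q_formula[OF assms(1)]
      using nn by (simp add: sum_nonneg)
  next
    fix i j assume z: "(signed_laplacian \<gamma> *v x) \<bullet> x = 0" and g: "\<gamma> i j < 0"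
    have "(\<Sum>i\<in>UNIV. \<Sum>j\<in>UNIV. - \<gamma> i j * (x$i - x$j)^2) = 0" using z Q_formula[OF assms(1)] by simp
    then have "(\<Sum>j\<in>UNIV. - \<gamma> i j * (x$i - x$j)^2) = 0" using nn by (simp add: sum_nonneg_eq_0_iff)
    then have "- \<gamma> i j * (x$i - x$j)^2 = 0" using t by (simp add: sum_nonneg_eq_0_iff)
    then show "x$i = x$j" using g by simp
  qed
qed

lemma Q_M:
  fixes \<gamma> :: "'n::finite \<Rightarrow> 'n \<Rightarrow> real"
  assumes "signed_graph \<gamma>" "\<And>i j. \<gamma> i j < 0 \<Longrightarrow> x$i = x$j"
  shows "(signed_laplacian \<gamma> *v x) \<bullet> x \<le> 0 \<and>
    ((signed_laplacian \<gamma> *v x) \<bullet> x = 0 \<longrightarrow> (\<forall>i j. \<gamma> i j > 0 \<longrightarrow> x$i = x$j))"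
proof -
  have t: "- \<gamma> i j * (x$i - x$j)^2 \<le> 0" for i j
  proof (cases "\<gamma> i j < 0")
    case True then show ?thesis using assms(2)[of i j] by simp
  next
    case False then show ?thesis by (simp add: mult_nonneg_nonneg)
  qed
  have nn: "(\<Sum>j\<in>UNIV. - \<gamma> i j * (x$i - x$j)^2) \<le> 0" for i using t by (simp add: sum_nonpos)
  show ?thesis
  proof (intro conjI impI allI)
    show "(signed_laplacian \<gamma> *v x) \<bullet> x \<le> 0" unfolding Q_formula[OF assms(1)]
      using nn by (simp add: sum_nonpos)
  next
    fix i j assume z: "(signed_laplacian \<gamma> *v x) \<bullet> x = 0" and g: "\<gamma> i j > 0"
    have "(\<Sum>i\<in>UNIV. \<Sum>j\<in>UNIV. \<gamma> i j * (x$i - x$j)^2) = 0" using z Q_formula[OF assms(1)]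
      by (simp add: sum_negf)
    moreover have "(\<Sum>j\<in>UNIV. \<gamma> i j * (x$i - x$j)^2) \<ge> 0" for i using t
      by (intro sum_nonneg) (smt (verit) mult_minus_left)
    ultimately have "(\<Sum>j\<in>UNIV. \<gamma> i j * (x$i - x$j)^2) = 0" by (simp add: sum_nonneg_eq_0_iff)
    moreover have "\<gamma> i j * (x$i - x$j)^2 \<ge> 0" for j using t[of i j] by linarith
    ultimately have "\<gamma> i j * (x$i - x$j)^2 = 0" by (simp add: sum_nonneg_eq_0_iff)
    then show "x$i = x$j" using g by simp
  qed
qed



definition rel :: "('n \<Rightarrow> 'n \<Rightarrow> bool) \<Rightarrow> 'n \<Rightarrow> 'n \<Rightarrow> bool" where
  "rel E = (\<lambda>a b. E a b \<or> E b a)\<^sup>*\<^sup>*"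

lemma rel_sym: "rel E a b \<Longrightarrow> rel E b a"
proof -
  have eq: "(\<lambda>a b. E a b \<or> E b a) = symclp E" by (simp add: symclp_def fun_eq_iff)
  show "rel E a b \<Longrightarrow> rel E b a" unfolding rel_def eq by (rule rtranclp_symclp_sym)
qed

lemma rel_trans: "rel E a b \<Longrightarrow> rel E b c \<Longrightarrow> rel E a c"
  unfolding rel_def by (rule rtranclp_trans)

lemma rel_refl: "rel E a a" unfolding rel_def by simp

lemma rel_edge: "E a b \<Longrightarrow> rel E a b" unfolding rel_def by (rule r_into_rtranclp) simp

lemma components_eq: "components E = (\<lambda>i. {j. rel E i j}) ` UNIV"
  unfolding components_def rel_def by auto

lemma comp_eq: "i \<in> {j. rel E k j} \<Longrightarrow> {j. rel E k j} = {j. rel E i j}"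
proof -
  assume "i \<in> {j. rel E k j}"
  then have ki: "rel E k i" by simp
  then have ik: "rel E i k" by (rule rel_sym)
  show ?thesis
  proof (intro set_eqI iffI)
    fix j assume "j \<in> {j. rel E k j}" then show "j \<in> {j. rel E i j}" using rel_trans[OF ik] by simp
  next
    fix j assume "j \<in> {j. rel E i j}" then show "j \<in> {j. rel E k j}" using rel_trans[OF ki] by simp
  qed
qed

lemma finite_components: "finite (components (E :: 'n::finite \<Rightarrow> 'n \<Rightarrow> bool))"
  unfolding components_eq by simp

lemma span_comp_const:
  fixes E :: "'n::finite \<Rightarrow> 'n \<Rightarrow> bool"
  assumes "x \<in> span (char_vec ` components E)" "E i j"
  shows "x$i = x$j"
proof -
  let ?K = "{x :: real^'n. \<forall>i j. E i j \<longrightarrow> x$i = x$j}"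
  have sK: "subspace ?K" unfolding subspace_def by auto
  have "char_vec ` components E \<subseteq> ?K"
  proof
    fix v assume "v \<in> char_vec ` components E"
    then obtain k where v: "v = char_vec {j. rel E k j}" unfolding components_eq by blast
    have "rel E k a \<longleftrightarrow> rel E k b" if "E a b" for a b
    proof -
      have ab: "rel E a b" using rel_edge[of E a b] that by blast
      have ba: "rel E b a" using rel_sym[OF ab] .
      show ?thesis using rel_trans[of E k a b, OF _ ab] rel_trans[of E k b a, OF _ ba] by blast
    qed
    then show "v \<in> ?K" unfolding v char_vec_def by auto
  qed
  then have "span (char_vec ` components E) \<subseteq> ?K" using sK by (rule span_minimal)
  then show ?thesis using assms by blast
qed

lemma one_in_span:
  fixes E :: "'n::finite \<Rightarrow> 'n \<Rightarrow> bool"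
  shows "one \<in> span (char_vec ` components E)"
proof -
  have "(\<Sum>C\<in>components E. char_vec C) = one"
  proof (subst vec_eq_iff, rule allI)
    fix i
    have "(\<Sum>C\<in>components E. char_vec C) $ i = (\<Sum>C\<in>components E. if i \<in> C then 1 else 0)"
      by (simp add: char_vec_def)
    also have "\<dots> = (\<Sum>C\<in>components E. if C = {j. rel E i j} then 1 else 0)"
    proof (rule sum.cong[OF refl])
      fix C assume "C \<in> components E"
      then obtain k where C: "C = {j. rel E k j}" unfolding components_eq by blast
      have "i \<in> C \<longleftrightarrow> C = {j. rel E i j}"
        using comp_eq[of i E k] rel_refl[of E i] C by blast
      then show "(if i \<in> C then 1 else 0) = (if C = {j. rel E i j} then (1::real) else 0)" by simp
    qed
    also have "\<dots> = 1"
      using finite_components[of E] by (simp add: sum.delta' components_eq)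
    finally show "(\<Sum>C\<in>components E. char_vec C) $ i = one $ i" by (simp add: one_def)
  qed
  moreover have "(\<Sum>C\<in>components E. char_vec C) \<in> span (char_vec ` components E)"
    by (intro span_sum span_base) auto
  ultimately show ?thesis by simp
qed

lemma dim_span_comp:
  fixes E :: "'n::finite \<Rightarrow> 'n \<Rightarrow> bool"
  shows "dim (span (char_vec ` components E)) = num_components E"
proof -
  have ne: "C \<noteq> {}" if Cin: "C \<in> components E" for C
  proof -
    obtain i where "C = {j. rel E i j}" using Cin unfolding components_eq by blast
    then have "i \<in> C" using rel_refl[of E i] by simp
    then show ?thesis by blast
  qed
  have disj: "C \<inter> D = {}" if CD: "C \<in> components E" "D \<in> components E" "C \<noteq> D" for C D
  proof -
    obtain a b where C: "C = {j. rel E a j}" and D: "D = {j. rel E b j}"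
      using CD unfolding components_eq by blast
    show ?thesis
    proof (rule ccontr)
      assume "C \<inter> D \<noteq> {}"
      then obtain i where "i \<in> C" "i \<in> D" by blast
      then have "C = {j. rel E i j}" "D = {j. rel E i j}" using comp_eq[of i E a] comp_eq[of i E b] C D by simp_all
      then show False using CD by simp
    qed
  qed
  have inj: "inj (char_vec :: 'n set \<Rightarrow> real^'n)"
  proof (rule injI)
    fix C D :: "'n set" assume "char_vec C = char_vec D"
    then have h: "char_vec C $ i = char_vec D $ i" for i by simp
    have "i \<in> C \<longleftrightarrow> i \<in> D" for i
      using h[of i] by (cases "i \<in> C"; cases "i \<in> D") (simp_all add: char_vec_def)
    then show "C = D" by blast
  qed
  have po: "pairwise orthogonal (char_vec ` components E)"
    unfolding pairwise_def orthogonal_def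
  proof (intro ballI impI)
    fix u v assume u: "u \<in> char_vec ` components E" and v: "v \<in> char_vec ` components E" and uv: "u \<noteq> v"
    then obtain C D where C: "C \<in> components E" "u = char_vec C" and D: "D \<in> components E" "v = char_vec D" by blast
    have "C \<noteq> D"
    proof
      assume "C = D" then show False using uv C D by simp
    qed
    then have d: "C \<inter> D = {}" using disj[OF C(1) D(1)] by simp
    have "u \<bullet> v = (\<Sum>i\<in>UNIV. (if i \<in> C then 1 else 0) * (if i \<in> D then 1 else (0::real)))"
      unfolding C D char_vec_def inner_vec_def by simp
    also have "\<dots> = 0" using d by (intro sum.neutral) auto
    finally show "u \<bullet> v = 0" .
  qed
  have n0: "0 \<notin> char_vec ` components E"
  proof
    assume "0 \<in> char_vec ` components E"
    then obtain C where C: "C \<in> components E" "char_vec C = 0" by (metis imageE)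
    then obtain i where "i \<in> C" using ne by blast
    then have "char_vec C $ i = 1" by (simp add: char_vec_def)
    then show False using C by simp
  qed
  have "independent (char_vec ` components E)" by (rule pairwise_orthogonal_independent[OF po n0])
  then have "dim (span (char_vec ` components E)) = card (char_vec ` components E)"
    by (rule dim_span_eq_card_independent)
  also have "\<dots> = card (components E)" using inj by (simp add: card_image inj_on_subset)
  finally show ?thesis by (simp add: num_components_def)
qed

lemma num_components_pos:
  fixes E :: "'n::finite \<Rightarrow> 'n \<Rightarrow> bool"
  shows "num_components E \<ge> 1"
proof -
  have "components E \<noteq> {}" unfolding components_eq by simp
  then show ?thesis using finite_components[of E] unfolding num_components_def
    by (simp add: Suc_leI card_gt_0_iff)
qed



lemma const_all:
  fixes \<gamma> :: "'n::finite \<Rightarrow> 'n \<Rightarrow> real" and x :: "real^'n"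
  assumes con: "connected_graph (all_edges \<gamma>)"
    and h: "\<And>i j. \<gamma> i j \<noteq> 0 \<Longrightarrow> x$i = x$j"
  shows "x \<in> span {one}"
proof -
  have "x$i = x$j" for i j
  proof -
    have r: "(\<lambda>a b. all_edges \<gamma> a b \<or> all_edges \<gamma> b a)\<^sup>*\<^sup>* i j"
      using con unfolding connected_graph_def by blast
    then show ?thesis
    proof (induction rule: rtranclp_induct)
      case base then show ?case by simp
    next
      case (step y z)
      have "x$y = x$z"
      proof (cases "all_edges \<gamma> y z")
        case True then show ?thesis using h by (simp add: all_edges_def)
      next
        case False
        then have "all_edges \<gamma> z y" using step(2) by blast
        then show ?thesis using h[of z y] by (simp add: all_edges_def)
      qed
      then show ?case using step(3) by simp
    qed
  qed
  then have eq: "x = (x$undefined) *\<^sub>R one" by (simp add: vec_eq_iff one_def)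
  have "(x$undefined) *\<^sub>R one \<in> span {one}" by (intro span_scale span_base) simp
  then show ?thesis by (subst eq)
qed

lemma core:
  fixes \<gamma> :: "'n::finite \<Rightarrow> 'n \<Rightarrow> real"
  assumes sg: "signed_graph \<gamma>" and con: "connected_graph (all_edges \<gamma>)"
  shows "n_neg (compressed_op \<gamma> (S_fixed \<gamma>)) (S_fixed \<gamma>) = num_components (neg_edges \<gamma>) - 1
    \<and> n_zero (compressed_op \<gamma> (S_fixed \<gamma>)) (S_fixed \<gamma>) = 1
    \<and> n_pos (compressed_op \<gamma> (S_fixed \<gamma>)) (S_fixed \<gamma>) = num_components (pos_edges \<gamma>) - 1
    \<and> dim (S_fixed \<gamma>) = num_components (pos_edges \<gamma>) + num_components (neg_edges \<gamma>) - 1"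
proof -
  define L where "L = signed_laplacian \<gamma>"
  define S where "S = S_fixed \<gamma>"
  define P where "P = span (char_vec ` components (pos_edges \<gamma>))"
  define M where "M = span (char_vec ` components (neg_edges \<gamma>))"
  define f where "f = compressed_op \<gamma> S"
  define p where "p = num_components (pos_edges \<gamma>)"
  define m where "m = num_components (neg_edges \<gamma>)"
  have p1: "p \<ge> 1" and m1: "m \<ge> 1" unfolding p_def m_def by (rule num_components_pos)+
  have subS: "subspace S" unfolding S_def S_fixed_def by simp
  have Seq: "S = {a + b | a b. a \<in> P \<and> b \<in> M}"
    unfolding S_def S_fixed_def P_def M_def image_Un by (rule span_Un)
  have PS: "P \<subseteq> S" unfolding S_def S_fixed_def P_def by (intro span_mono) blast
  have MS: "M \<subseteq> S" unfolding S_def S_fixed_def M_def by (intro span_mono) blast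
  have Pc: "\<And>x i j. x \<in> P \<Longrightarrow> \<gamma> i j > 0 \<Longrightarrow> x$i = x$j"
    unfolding P_def using span_comp_const[of _ "pos_edges \<gamma>"] by (simp add: pos_edges_def)
  have Mc: "\<And>x i j. x \<in> M \<Longrightarrow> \<gamma> i j < 0 \<Longrightarrow> x$i = x$j"
    unfolding M_def using span_comp_const[of _ "neg_edges \<gamma>"] by (simp add: neg_edges_def)
  have oneP: "one \<in> P" unfolding P_def by (rule one_in_span)
  have oneM: "one \<in> M" unfolding M_def by (rule one_in_span)
  have one0: "one \<noteq> (0::real^'n)"
  proof
    assume "one = (0::real^'n)"
    then have "one $ (undefined::'n) = 0" by simp
    then show False by (simp add: one_def)
  qed
  have oneS: "one \<in> S" using oneP PS by blast
  have PM: "P \<inter> M = span {one}"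
  proof
    show "P \<inter> M \<subseteq> span {one}"
    proof
      fix x assume x: "x \<in> P \<inter> M"
      show "x \<in> span {one}"
      proof (rule const_all[OF con])
        fix i j assume "\<gamma> i j \<noteq> 0"
        then have "\<gamma> i j > 0 \<or> \<gamma> i j < 0" by linarith
        then show "x$i = x$j" using Pc Mc x by blast
      qed
    qed
  next
    have "span {one} \<subseteq> P" unfolding P_def by (rule span_minimal) (use oneP P_def in auto)
    moreover have "span {one} \<subseteq> M" unfolding M_def by (rule span_minimal) (use oneM M_def in auto)
    ultimately show "span {one} \<subseteq> P \<inter> M" by blast
  qed
  have dPM: "dim (P \<inter> M) = 1" using one0 by (simp add: PM)
  have dP: "dim P = p" unfolding P_def p_def by (rule dim_span_comp)
  have dM: "dim M = m" unfolding M_def m_def by (rule dim_span_comp)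
  have dimS: "dim S + 1 = p + m"
    using dim_sums_Int[of P M] Seq dPM dP dM unfolding P_def M_def by simp
  have projc: "orth_proj S y \<in> S \<and> (\<forall>s\<in>S. (y - orth_proj S y) \<bullet> s = 0)" for y
    by (rule orth_proj_char[OF subS])
  have fdef: "f x = orth_proj S (L *v x)" for x by (simp add: f_def compressed_op_def L_def)
  have lin: "linear f"
  proof -
    have "f = orth_proj S \<circ> (\<lambda>x. L *v x)" by (simp add: fun_eq_iff fdef)
    then show ?thesis using linear_compose[OF matrix_vector_mul_linear orth_proj_linear[OF subS]] by simp
  qed
  have fS: "\<And>x. x \<in> S \<Longrightarrow> f x \<in> S" using projc fdef by simp
  have fL: "f x \<bullet> y = (L *v x) \<bullet> y" if "y \<in> S" for x y
  proof -
    have "(L *v x - f x) \<bullet> y = 0" using projc[of "L *v x"] that fdef by simp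
    then show ?thesis by (simp add: inner_diff_left)
  qed
  have Lsym: "(L *v x) \<bullet> y = x \<bullet> (L *v y)" for x y unfolding L_def by (rule L_sym[OF sg])
  have fsym: "\<And>x y. x \<in> S \<Longrightarrow> y \<in> S \<Longrightarrow> f x \<bullet> y = x \<bullet> f y"
  proof -
    fix x y assume x: "x \<in> S" and y: "y \<in> S"
    have "f x \<bullet> y = (L *v x) \<bullet> y" using fL y by simp
    also have "\<dots> = (L *v y) \<bullet> x" using Lsym by (simp add: inner_commute)
    also have "\<dots> = f y \<bullet> x" using fL x by simp
    finally show "f x \<bullet> y = x \<bullet> f y" by (simp add: inner_commute)
  qed
  interpret sa: sa_op S f by (rule sa_op.intro[OF subS lin fS fsym])
  have em: "eig_mult f S c = dim (sa.E c)" for c by (simp add: eig_mult_def sa.E_def)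
  have QP: "(L *v x) \<bullet> x \<ge> 0 \<and> ((L *v x) \<bullet> x = 0 \<longrightarrow> (\<forall>i j. \<gamma> i j < 0 \<longrightarrow> x$i = x$j))" if "x \<in> P" for x
    unfolding L_def by (rule Q_P[OF sg]) (use Pc that in blast)
  have QM: "(L *v x) \<bullet> x \<le> 0 \<and> ((L *v x) \<bullet> x = 0 \<longrightarrow> (\<forall>i j. \<gamma> i j > 0 \<longrightarrow> x$i = x$j))" if "x \<in> M" for x
    unfolding L_def by (rule Q_M[OF sg]) (use Mc that in blast)
  have E0: "sa.E 0 = span {one}"
  proof
    show "sa.E 0 \<subseteq> span {one}"
    proof
      fix x assume x: "x \<in> sa.E 0"
      then have xS: "x \<in> S" and fx: "f x = 0" by (auto simp: sa.E_def)
      obtain a b where ab: "x = a + b" "a \<in> P" "b \<in> M" using xS Seq by blast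
      define d where "d = a - b"
      have dS: "d \<in> S" unfolding d_def using ab PS MS subS by (blast intro: subspace_diff)
      have Lx: "L *v x = L *v a + L *v b" using ab by (simp add: matrix_vector_right_distrib)
      have "(L *v x) \<bullet> d = (L *v a) \<bullet> a - (L *v a) \<bullet> b + (L *v b) \<bullet> a - (L *v b) \<bullet> b"
        unfolding Lx d_def by (simp add: inner_add_left inner_diff_right)
      moreover have "(L *v a) \<bullet> b = (L *v b) \<bullet> a" using Lsym by (simp add: inner_commute)
      ultimately have e1: "(L *v x) \<bullet> d = (L *v a) \<bullet> a - (L *v b) \<bullet> b" by simp
      have "(L *v x) \<bullet> d = 0" using fL[OF dS, of x] fx by simp
      then have e2: "(L *v a) \<bullet> a = (L *v b) \<bullet> b" using e1 by simp
      have qa: "(L *v a) \<bullet> a \<ge> 0" using QP[OF ab(2)] by blast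
      have qb: "(L *v b) \<bullet> b \<le> 0" using QM[OF ab(3)] by blast
      have za: "(L *v a) \<bullet> a = 0" and zb: "(L *v b) \<bullet> b = 0" using qa qb e2 by linarith+
      have "a \<in> span {one}"
      proof (rule const_all[OF con])
        fix i j assume "\<gamma> i j \<noteq> 0"
        then have "\<gamma> i j > 0 \<or> \<gamma> i j < 0" by linarith
        then show "a$i = a$j" using Pc[OF ab(2)] QP[OF ab(2)] za by blast
      qed
      moreover have "b \<in> span {one}"
      proof (rule const_all[OF con])
        fix i j assume "\<gamma> i j \<noteq> 0"
        then have "\<gamma> i j > 0 \<or> \<gamma> i j < 0" by linarith
        then show "b$i = b$j" using Mc[OF ab(3)] QM[OF ab(3)] zb by blast
      qed
      ultimately show "x \<in> span {one}" using ab by (simp add: span_add)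
    qed
  next
    have "f one = 0"
      using fdef[of one] L_one[OF sg] linear_0[OF orth_proj_linear[OF subS]] by (simp add: L_def)
    then have "one \<in> sa.E 0" using oneS by (simp add: sa.E_def)
    then have "{one} \<subseteq> sa.E 0" by simp
    then show "span {one} \<subseteq> sa.E 0" using sa.E_sub by (rule span_minimal)
  qed
  have nz: "n_zero f S = 1" unfolding n_zero_def em E0 using one0 by simp
  have "one \<in> span {one}" by (rule span_base) simp
  then have zeig: "0 \<in> eigenvalues_on f S" using sa.eig_iff[of 0] E0 one0 by auto
  define A where "A = {c \<in> eigenvalues_on f S. c < 0}"
  define B where "B = {c \<in> eigenvalues_on f S. c > 0}"
  have fA: "finite A" and fB: "finite B" unfolding A_def B_def using sa.finite_eig by auto
  define Nn where "Nn = span (\<Union>c\<in>A. sa.E c)"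
  define Np where "Np = span (\<Union>c\<in>B. sa.E c)"
  have dNn: "dim Nn = n_neg f S" unfolding Nn_def n_neg_def em A_def[symmetric]
    by (rule sa.dim_UE[OF fA])
  have dNp: "dim Np = n_pos f S" unfolding Np_def n_pos_def em B_def[symmetric]
    by (rule sa.dim_UE[OF fB])
  have NnS: "Nn \<subseteq> S" unfolding Nn_def by (rule sa.span_UE_S)
  have NpS: "Np \<subseteq> S" unfolding Np_def by (rule sa.span_UE_S)
  have Nn0: "Nn \<inter> P = {0}"
  proof
    show "Nn \<inter> P \<subseteq> {0}"
    proof
      fix x assume x: "x \<in> Nn \<inter> P"
      have s: "(-1) * (f x \<bullet> x) \<ge> 0 \<and> ((-1) * (f x \<bullet> x) = 0 \<longrightarrow> x = 0)"
        by (rule sa.sign_UE[OF fA]) (use x Nn_def A_def in auto)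
      have "f x \<bullet> x = (L *v x) \<bullet> x" using fL x NnS by blast
      then show "x \<in> {0}" using s QP[of x] x by auto
    qed
  next
    show "{0} \<subseteq> Nn \<inter> P" unfolding Nn_def P_def by (simp add: span_0)
  qed
  have Np0: "Np \<inter> M = {0}"
  proof
    show "Np \<inter> M \<subseteq> {0}"
    proof
      fix x assume x: "x \<in> Np \<inter> M"
      have s: "1 * (f x \<bullet> x) \<ge> 0 \<and> (1 * (f x \<bullet> x) = 0 \<longrightarrow> x = 0)"
        by (rule sa.sign_UE[OF fB]) (use x Np_def B_def in auto)
      have "f x \<bullet> x = (L *v x) \<bullet> x" using fL x NpS by blast
      then show "x \<in> {0}" using s QM[of x] x by auto
    qed
  next
    show "{0} \<subseteq> Np \<inter> M" unfolding Np_def M_def by (simp add: span_0)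
  qed
  have bn: "n_neg f S + p \<le> dim S"
  proof -
    have "dim {x + y |x y. x \<in> Nn \<and> y \<in> P} + dim (Nn \<inter> P) = dim Nn + dim P"
      by (rule dim_sums_Int) (simp_all add: Nn_def P_def)
    moreover have "{x + y |x y. x \<in> Nn \<and> y \<in> P} \<subseteq> S" using NnS PS subS by (auto intro: subspace_add)
    ultimately have "dim {x + y |x y. x \<in> Nn \<and> y \<in> P} \<le> dim S"
      and "dim {x + y |x y. x \<in> Nn \<and> y \<in> P} + 0 = dim Nn + dim P"
      by (simp_all only: dim_subset Nn0 dim_singleton) simp
    then show ?thesis using dNn dP by linarith
  qed
  have bp: "n_pos f S + m \<le> dim S"
  proof -
    have "dim {x + y |x y. x \<in> Np \<and> y \<in> M} + dim (Np \<inter> M) = dim Np + dim M"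
      by (rule dim_sums_Int) (simp_all add: Np_def M_def)
    moreover have "{x + y |x y. x \<in> Np \<and> y \<in> M} \<subseteq> S" using NpS MS subS by (auto intro: subspace_add)
    ultimately have "dim {x + y |x y. x \<in> Np \<and> y \<in> M} \<le> dim S"
      and "dim {x + y |x y. x \<in> Np \<and> y \<in> M} + 0 = dim Np + dim M"
      by (simp_all only: dim_subset Np0 dim_singleton) simp
    then show ?thesis using dNp dM by linarith
  qed
  have tot: "dim S = n_neg f S + n_zero f S + n_pos f S"
  proof -
    have eq: "eigenvalues_on f S = A \<union> ({0} \<union> B)" unfolding A_def B_def using zeig by auto
    have "dim S = (\<Sum>c\<in>eigenvalues_on f S. dim (sa.E c))" by (rule sa.dim_total)
    also have "\<dots> = (\<Sum>c\<in>A. dim (sa.E c)) + ((\<Sum>c\<in>{0}. dim (sa.E c)) + (\<Sum>c\<in>B. dim (sa.E c)))"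
    proof -
      have d1: "A \<inter> ({0} \<union> B) = {}" by (auto simp: A_def B_def)
      have d2: "{0} \<inter> B = {}" by (auto simp: B_def)
      have f2: "finite ({0} \<union> B)" using fB by simp
      show ?thesis unfolding eq
        using sum.union_disjoint[OF fA f2 d1, of "\<lambda>c. dim (sa.E c)"]
          sum.union_disjoint[OF _ fB d2, of "\<lambda>c. dim (sa.E c)"] by simp
    qed
    finally show ?thesis unfolding n_neg_def n_pos_def n_zero_def em A_def[symmetric] B_def[symmetric]
      by simp
  qed
  have "n_neg f S = m - 1" "n_pos f S = p - 1" "dim S = p + m - 1"
    using tot nz bn bp dimS p1 m1 by linarith+
  then show ?thesis using nz unfolding f_def S_def p_def m_def by simp
qed


theorem mainTheorem9:
  fixes \<gamma> :: "'n::finite \<Rightarrow> 'n \<Rightarrow> real"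
  assumes "signed_graph \<gamma>"
    and "connected_graph (all_edges \<gamma>)"
  shows "n_neg (compressed_op \<gamma> (S_fixed \<gamma>)) (S_fixed \<gamma>) = num_components (neg_edges \<gamma>) - 1
    \<and> n_zero (compressed_op \<gamma> (S_fixed \<gamma>)) (S_fixed \<gamma>) = 1
    \<and> n_pos (compressed_op \<gamma> (S_fixed \<gamma>)) (S_fixed \<gamma>) = num_components (pos_edges \<gamma>) - 1
    \<and> fixed_index \<gamma> (S_fixed \<gamma>)
    \<and> dim (S_fixed \<gamma>) = num_components (pos_edges \<gamma>) + num_components (neg_edges \<gamma>) - 1"
proof -
  have c: "n_neg (compressed_op \<gamma> (S_fixed \<gamma>)) (S_fixed \<gamma>) = num_components (neg_edges \<gamma>) - 1
    \<and> n_zero (compressed_op \<gamma> (S_fixed \<gamma>)) (S_fixed \<gamma>) = 1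
    \<and> n_pos (compressed_op \<gamma> (S_fixed \<gamma>)) (S_fixed \<gamma>) = num_components (pos_edges \<gamma>) - 1
    \<and> dim (S_fixed \<gamma>) = num_components (pos_edges \<gamma>) + num_components (neg_edges \<gamma>) - 1"
    by (rule core[OF assms])
  have fi: "fixed_index \<gamma> (S_fixed \<gamma>)"
    unfolding fixed_index_def
  proof (intro conjI allI impI)
    show "subspace (S_fixed \<gamma>)" unfolding S_fixed_def by simp
  next
    fix \<gamma>' :: "'n \<Rightarrow> 'n \<Rightarrow> real"
    assume h: "signed_graph \<gamma>' \<and> (\<forall>i j. sgn (\<gamma>' i j) = sgn (\<gamma> i j))"
    have sg': "signed_graph \<gamma>'" using h by blast
    have sg: "sgn (\<gamma>' i j) = sgn (\<gamma> i j)" for i j using h by blast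
    have pe: "pos_edges \<gamma>' = pos_edges \<gamma>"
      unfolding pos_edges_def fun_eq_iff using sg by (metis sgn_1_pos)
    have ne: "neg_edges \<gamma>' = neg_edges \<gamma>"
      unfolding neg_edges_def fun_eq_iff using sg by (metis sgn_1_neg)
    have ae: "all_edges \<gamma>' = all_edges \<gamma>"
      unfolding all_edges_def fun_eq_iff using sg by (metis sgn_0_0)
    have Seq: "S_fixed \<gamma>' = S_fixed \<gamma>" unfolding S_fixed_def pe ne ..
    have con': "connected_graph (all_edges \<gamma>')" using assms(2) ae by simp
    have c': "n_neg (compressed_op \<gamma>' (S_fixed \<gamma>')) (S_fixed \<gamma>') = num_components (neg_edges \<gamma>') - 1
      \<and> n_zero (compressed_op \<gamma>' (S_fixed \<gamma>')) (S_fixed \<gamma>') = 1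
      \<and> n_pos (compressed_op \<gamma>' (S_fixed \<gamma>')) (S_fixed \<gamma>') = num_components (pos_edges \<gamma>') - 1
      \<and> dim (S_fixed \<gamma>') = num_components (pos_edges \<gamma>') + num_components (neg_edges \<gamma>') - 1"
      by (rule core[OF sg' con'])
    show "n_neg (compressed_op \<gamma>' (S_fixed \<gamma>)) (S_fixed \<gamma>) = n_neg (compressed_op \<gamma> (S_fixed \<gamma>)) (S_fixed \<gamma>)"
      using c c' unfolding Seq pe ne by simp
    show "n_zero (compressed_op \<gamma>' (S_fixed \<gamma>)) (S_fixed \<gamma>) = n_zero (compressed_op \<gamma> (S_fixed \<gamma>)) (S_fixed \<gamma>)"
      using c c' unfolding Seq pe ne by simp
    show "n_pos (compressed_op \<gamma>' (S_fixed \<gamma>)) (S_fixed \<gamma>) = n_pos (compressed_op \<gamma> (S_fixed \<gamma>)) (S_fixed \<gamma>)"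
      using c c' unfolding Seq pe ne by simp
  qed
  show ?thesis using c fi by blast
qed

end
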